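(* Let $n\ge2$, let $\sigma,\delta,\tau\in\mathbb{C}$ with $|\sigma|=|\tau|>0$, fix a square root $\sqrt{\sigma\tau}$, and let $(\alpha,\beta)$ be one of the eight pairs $(0,\sqrt{\sigma\tau})$, $(\sqrt{\sigma\tau},0)$, $(0,-\sqrt{\sigma\tau})$, $(-\sqrt{\sigma\tau},0)$, $(\sqrt{\sigma\tau},-\sqrt{\sigma\tau})$, $(-\sqrt{\sigma\tau},\sqrt{\sigma\tau})$, $(\sqrt{\sigma\tau},\sqrt{\sigma\tau})$, $(-\sqrt{\sigma\tau},-\sqrt{\sigma\tau})$. Then $T_{\alpha,\beta}$ is normal, and consequently every eigenvalue $\lambda$ of $T_{\alpha,\beta}$ has condition number $\kappa(\lambda)=1$.
   Context: $T_{\alpha,\beta}$ denotes the $n\times n$ tridiagonal matrix with subdiagonal entries $\sigma$, superdiagonal entries $\tau$, and diagonal entries $\delta$ except the $(1,1)$ entry $\delta-\alpha$ and the $(n,n)$ entry $\delta-\beta$. For a simple eigenvalue $\lambda$ with right eigenvector $x$ ($Ax=\lambda x$) and left eigenvector $y$ ($y^HA=\lambda y^H$), the condition number is $\kappa(\lambda)=\|x\|_2\|y\|_2/|y^Hx|$. *)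

theory Defs
  imports "Jordan_Normal_Form.Schur_Decomposition"
begin

text \<open>The n x n tridiagonal matrix T_{alpha,beta}: subdiagonal sigma, superdiagonal tau,
  diagonal delta, except (1,1) entry delta - alpha and (n,n) entry delta - beta
  (0-based indices 0 and n-1).\<close>
definition tridiag_T :: "nat \<Rightarrow> complex \<Rightarrow> complex \<Rightarrow> complex \<Rightarrow> complex \<Rightarrow> complex \<Rightarrow> complex mat" where
  "tridiag_T n \<sigma> \<delta> \<tau> \<alpha> \<beta> = mat n n (\<lambda>(i, j).
     if i = j then (\<delta> - (if i = 0 then \<alpha> else 0) - (if i = n - 1 then \<beta> else 0))
     else if i = j + 1 then \<sigma>
     else if j = i + 1 then \<tau>
     else 0)"

definition normal_mat :: "complex mat \<Rightarrow> bool" where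
  "normal_mat A \<longleftrightarrow> A * mat_adjoint A = mat_adjoint A * A"

definition vnorm2 :: "complex vec \<Rightarrow> real" where
  "vnorm2 x = sqrt (\<Sum>i<dim_vec x. (cmod (x $ i))\<^sup>2)"

text \<open>Left eigenvector: y nonzero with y^H A = lambda y^H, written transposed.\<close>
definition left_eigenvector :: "complex mat \<Rightarrow> complex vec \<Rightarrow> complex \<Rightarrow> bool" where
  "left_eigenvector A y k \<longleftrightarrow> y \<in> carrier_vec (dim_row A) \<and> y \<noteq> 0\<^sub>v (dim_row A) \<and>
     transpose_mat A *\<^sub>v conjugate y = k \<cdot>\<^sub>v conjugate y"

text \<open>kappa = ||x|| ||y|| / |y^H x|, where y^H x = x \<bullet>c y.\<close>
definition cond_number :: "complex vec \<Rightarrow> complex vec \<Rightarrow> real" where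
  "cond_number x y = vnorm2 x * vnorm2 y / cmod (x \<bullet>c y)"

end

theory Submission
  imports Defs
begin

definition tri :: "nat \<Rightarrow> complex \<Rightarrow> complex \<Rightarrow> (nat \<Rightarrow> complex) \<Rightarrow> complex mat" where
  "tri n a b d = mat n n (\<lambda>(i, j). if i = j then d i else if i = j + 1 then a
     else if j = i + 1 then b else 0)"

lemma tri_carrier[simp]: "tri n a b d \<in> carrier_mat n n"
  and tri_dims[simp]: "dim_row (tri n a b d) = n" "dim_col (tri n a b d) = n"
  by (auto simp: tri_def)

lemma tri_index: "i < n \<Longrightarrow> j < n \<Longrightarrow> tri n a b d $$ (i,j) =
  (if i = j then d i else if i = j + 1 then a else if j = i + 1 then b else 0)"
  by (simp add: tri_def)

lemma sum3:
  fixes f :: "nat \<Rightarrow> complex"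
  assumes "i < n" and "\<And>k. k < n \<Longrightarrow> k \<noteq> i \<Longrightarrow> k + 1 \<noteq> i \<Longrightarrow> k \<noteq> i + 1 \<Longrightarrow> f k = 0"
  shows "(\<Sum>k\<in>{0..<n}. f k) = (if 0 < i then f (i - 1) else 0) + f i + (if i + 1 < n then f (i + 1) else 0)"
proof -
  have "(\<Sum>k\<in>{0..<n}. f k) = (\<Sum>k\<in>{0..<n}. (if k = i - 1 \<and> 0 < i then f (i - 1) else 0)
     + (if k = i then f i else 0) + (if k = i + 1 then f (i+1) else 0))"
    apply (rule sum.cong, simp)
    using assms by (cases i, auto)
  also have "\<dots> = (if 0 < i then f (i - 1) else 0) + f i + (if i + 1 < n then f (i + 1) else 0)"
    using assms(1) by (simp add: sum.distrib)
  finally show ?thesis .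
qed

lemma tri_mult_vec: assumes "v \<in> carrier_vec n" "i < n"
  shows "(tri n a b d *\<^sub>v v) $ i = (if 0 < i then a * v $ (i - 1) else 0) + d i * v $ i
     + (if i + 1 < n then b * v $ (i + 1) else 0)" (is "_ = ?r")
proof -
  have "(tri n a b d *\<^sub>v v) $ i = (\<Sum>k\<in>{0..<n}. tri n a b d $$ (i,k) * v $ k)"
    using assms by (simp add: scalar_prod_def)
  also have "\<dots> = ?r"
    using assms(2) by (subst sum3[OF assms(2)], auto simp: tri_index assms, cases i, auto simp: tri_index)
  finally show ?thesis .
qed

lemma tri_transpose: "transpose_mat (tri n a b d) = tri n b a d"
  by (rule eq_matI, auto simp: tri_index)

lemma tri_adjoint: "mat_adjoint (tri n a b d) = tri n (cnj b) (cnj a) (\<lambda>i. cnj (d i))"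
  by (rule eq_matI, auto simp: mat_adjoint_def mat_of_rows_index tri_index)


lemma tri_normal:
  assumes P: "\<And>i. i + 1 < n \<Longrightarrow> (d i - d (i+1)) * cnj a = cnj (d i - d (i+1)) * b"
    and ab: "a * cnj a = b * cnj b"
  shows "tri n a b d * tri n (cnj b) (cnj a) (\<lambda>i. cnj (d i)) = tri n (cnj b) (cnj a) (\<lambda>i. cnj (d i)) * tri n a b d"
proof (rule eq_matI)
  fix i j assume i: "i < dim_row (tri n (cnj b) (cnj a) (\<lambda>i. cnj (d i)) * tri n a b d)"
    and j: "j < dim_col (tri n (cnj b) (cnj a) (\<lambda>i. cnj (d i)) * tri n a b d)"
  let ?T = "tri n a b d" let ?H = "tri n (cnj b) (cnj a) (\<lambda>i. cnj (d i))"
  from i j have i: "i < n" and j: "j < n" by auto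
  have P2: "\<And>i. i + 1 < n \<Longrightarrow> cnj (d i - d (i+1)) * a = (d i - d (i+1)) * cnj b"
    using P by (metis complex_cnj_cnj complex_cnj_mult)
  have L: "(?T * ?H) $$ (i,j) = (\<Sum>k\<in>{0..<n}. ?T $$ (i,k) * ?H $$ (k,j))"
    using i j by (simp add: scalar_prod_def)
  have R: "(?H * ?T) $$ (i,j) = (\<Sum>k\<in>{0..<n}. ?H $$ (i,k) * ?T $$ (k,j))"
    using i j by (simp add: scalar_prod_def)
  have L2: "(\<Sum>k\<in>{0..<n}. ?T $$ (i,k) * ?H $$ (k,j)) = (if 0 < i then ?T $$ (i,i-1) * ?H $$ (i-1,j) else 0)
      + ?T $$ (i,i) * ?H $$ (i,j) + (if i+1 < n then ?T $$ (i,i+1) * ?H $$ (i+1,j) else 0)"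
    by (subst sum3[OF i, where f="\<lambda>k. ?T $$ (i,k) * ?H $$ (k,j)"], insert i, simp_all add: tri_index)
  have R2: "(\<Sum>k\<in>{0..<n}. ?H $$ (i,k) * ?T $$ (k,j)) = (if 0 < i then ?H $$ (i,i-1) * ?T $$ (i-1,j) else 0)
      + ?H $$ (i,i) * ?T $$ (i,j) + (if i+1 < n then ?H $$ (i,i+1) * ?T $$ (i+1,j) else 0)"
    by (subst sum3[OF i, where f="\<lambda>k. ?H $$ (i,k) * ?T $$ (k,j)"], insert i, simp_all add: tri_index)
  consider "j = i" | "j = i + 1" | "i = j + 1" | "j = i + 2" | "i = j + 2"
    | "j \<noteq> i" "j \<noteq> i + 1" "i \<noteq> j + 1" "j \<noteq> i + 2" "i \<noteq> j + 2" by blast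
  then show "(?T * ?H) $$ (i,j) = (?H * ?T) $$ (i,j)"
  proof cases
    case 1 then show ?thesis unfolding L R L2 R2 using i j ab by (cases "i = 0"; cases "i+1 = n"; simp add: tri_index algebra_simps)
  next
    case 2 then show ?thesis unfolding L R L2 R2 using i j P[of i] P2[of i] by (cases i; cases "i+2 = n"; simp add: tri_index algebra_simps)
  next
    case 3 then show ?thesis unfolding L R L2 R2 using i j P[of j] P2[of j] by (cases "j = 0"; cases "j+2 = n"; simp add: tri_index algebra_simps)
  next
    case 4 then show ?thesis unfolding L R L2 R2 using i j by (simp add: tri_index algebra_simps)
  next
    case 5 then show ?thesis unfolding L R L2 R2 using i j by (simp add: tri_index algebra_simps)
  next
    case 6 then show ?thesis unfolding L R L2 R2 using i j by (cases "i = 0"; simp add: tri_index algebra_simps)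
  qed
qed auto


lemma normal_kernel:
  assumes NB: "tri n a b d * tri n (cnj b) (cnj a) (\<lambda>i. cnj (d i)) = tri n (cnj b) (cnj a) (\<lambda>i. cnj (d i)) * tri n a b d"
    and x: "x \<in> carrier_vec n" and Nx: "tri n a b d *\<^sub>v x = 0\<^sub>v n"
  shows "tri n (cnj b) (cnj a) (\<lambda>i. cnj (d i)) *\<^sub>v x = 0\<^sub>v n"
proof -
  let ?T = "tri n a b d" let ?H = "tri n (cnj b) (cnj a) (\<lambda>i. cnj (d i))"
  define w where "w = ?H *\<^sub>v x"
  have w: "w \<in> carrier_vec n" unfolding w_def by (rule mult_mat_vec_carrier[OF tri_carrier x])
  have cw: "conjugate w = transpose_mat ?T *\<^sub>v conjugate x"
    unfolding tri_transpose
  proof (rule eq_vecI)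
    fix i assume "i < dim_vec (tri n b a d *\<^sub>v conjugate x)"
    then have i: "i < n" by simp
    have cx: "conjugate x \<in> carrier_vec n" using x by simp
    have "conjugate w $ i = cnj (w $ i)" using i w by simp
    also have "w $ i = (if 0 < i then cnj b * x $ (i - 1) else 0) + cnj (d i) * x $ i
     + (if i + 1 < n then cnj a * x $ (i + 1) else 0)" unfolding w_def by (rule tri_mult_vec[OF x i])
    also have "cnj \<dots> = (tri n b a d *\<^sub>v conjugate x) $ i"
      unfolding tri_mult_vec[OF cx i] using x i by auto
    finally show "conjugate w $ i = (tri n b a d *\<^sub>v conjugate x) $ i" .
  qed (insert w, simp)
  have Tw: "?T *\<^sub>v w = 0\<^sub>v n"
  proof -
    have "?T *\<^sub>v w = (?T * ?H) *\<^sub>v x" unfolding w_def by (rule assoc_mult_mat_vec[symmetric, OF tri_carrier tri_carrier x])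
    also have "\<dots> = (?H * ?T) *\<^sub>v x" using NB by simp
    also have "\<dots> = ?H *\<^sub>v (?T *\<^sub>v x)" by (rule assoc_mult_mat_vec[OF tri_carrier tri_carrier x])
    also have "\<dots> = 0\<^sub>v n" unfolding Nx
    proof (rule eq_vecI)
      fix i assume "i < dim_vec (0\<^sub>v n :: complex vec)"
      then have i: "i < n" by simp
      show "(?H *\<^sub>v 0\<^sub>v n) $ i = 0\<^sub>v n $ i"
        unfolding tri_mult_vec[OF zero_carrier_vec i] using i by simp
    qed simp
    finally show ?thesis .
  qed
  have "w \<bullet>c w = w \<bullet> (transpose_mat ?T *\<^sub>v conjugate x)" using cw by simp
  also have "\<dots> = (transpose_mat ?T *\<^sub>v conjugate x) \<bullet> w"
    by (rule comm_scalar_prod[OF w], rule mult_mat_vec_carrier[OF _ carrier_vec_conjugate[OF x]], simp add: tri_transpose)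
  also have "\<dots> = conjugate x \<bullet> (?T *\<^sub>v w)"
    by (rule transpose_vec_mult_scalar[OF tri_carrier w], insert x, simp)
  also have "\<dots> = 0" unfolding Tw using x by simp
  finally have "w \<bullet>c w = 0" .
  then show ?thesis using w unfolding w_def by simp
qed

lemma tri_unique:
  assumes b: "b \<noteq> 0" and v: "v \<in> carrier_vec n" and Mv: "tri n a b d *\<^sub>v v = 0\<^sub>v n"
    and v0: "v $ 0 = 0"
  shows "v = 0\<^sub>v n"
proof -
  have row: "\<And>i. i < n \<Longrightarrow> (if 0 < i then a * v $ (i - 1) else 0) + d i * v $ i
     + (if i + 1 < n then b * v $ (i + 1) else 0) = 0"
    using tri_mult_vec[OF v] Mv by (metis index_zero_vec(1))
  have "\<forall>k. k < n \<longrightarrow> v $ k = 0 \<and> (k + 1 < n \<longrightarrow> v $ (k+1) = 0)"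
  proof
    fix k show "k < n \<longrightarrow> v $ k = 0 \<and> (k + 1 < n \<longrightarrow> v $ (k+1) = 0)"
    proof (induction k)
      case 0
      then show ?case using row[of 0] v0 b by auto
    next
      case (Suc k)
      show ?case
      proof
        assume k: "Suc k < n"
        then have h: "v $ k = 0" "v $ (k+1) = 0" using Suc by auto
        have "Suc k + 1 < n \<longrightarrow> v $ (Suc k + 1) = 0"
          using row[of "Suc k"] h b k by auto
        then show "v $ Suc k = 0 \<and> (Suc k + 1 < n \<longrightarrow> v $ (Suc k + 1) = 0)" using h by simp
      qed
    qed
  qed
  then show ?thesis using v by (intro eq_vecI, auto)
qed


lemma tridiag_tri: "tridiag_T n \<sigma> \<delta> \<tau> \<alpha> \<beta> =
  tri n \<sigma> \<tau> (\<lambda>i. \<delta> - (if i = 0 then \<alpha> else 0) - (if i = n - 1 then \<beta> else 0))"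
  unfolding tridiag_T_def tri_def by simp

lemma key_s:
  fixes \<sigma> \<tau> s :: complex
  assumes "cmod \<sigma> = cmod \<tau>" and "cmod \<sigma> > 0" and "s\<^sup>2 = \<sigma> * \<tau>"
  shows "s * cnj \<sigma> = cnj s * \<tau>"
proof -
  have s0: "\<tau> \<noteq> 0" "\<sigma> \<noteq> 0" using assms by auto
  then have "s \<noteq> 0" using assms(3) by auto
  have "cmod (s^2) = cmod (\<sigma>*\<tau>)" using assms(3) by simp
  then have "cmod s ^ 2 = cmod \<sigma> * cmod \<tau>" by (simp add: norm_mult norm_power)
  then have ns: "cmod s ^ 2 = cmod \<sigma> ^ 2" using assms(1) by (simp add: power2_eq_square)
  have "s * (s * cnj \<sigma>) = \<tau> * (\<sigma> * cnj \<sigma>)" using assms(3) by (simp add: power2_eq_square algebra_simps)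
  also have "\<dots> = \<tau> * of_real ((cmod \<sigma>)\<^sup>2)" by (simp only: complex_norm_square)
  also have "\<dots> = \<tau> * of_real ((cmod s)\<^sup>2)" by (simp only: ns)
  also have "\<dots> = s * (cnj s * \<tau>)" by (simp only: complex_norm_square) (simp add: algebra_simps)
  finally show ?thesis using \<open>s \<noteq> 0\<close> by simp
qed


theorem proposition3:
  fixes n :: nat and \<sigma> \<delta> \<tau> s \<alpha> \<beta> :: complex
  assumes "n \<ge> 2"
    and "cmod \<sigma> = cmod \<tau>" and "cmod \<sigma> > 0"
    and "s\<^sup>2 = \<sigma> * \<tau>"
    and "(\<alpha>, \<beta>) \<in> {(0, s), (s, 0), (0, -s), (-s, 0), (s, -s), (-s, s), (s, s), (-s, -s)}"
  shows "normal_mat (tridiag_T n \<sigma> \<delta> \<tau> \<alpha> \<beta>)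
    \<and> (\<forall>lam x y. eigenvalue (tridiag_T n \<sigma> \<delta> \<tau> \<alpha> \<beta>) lam
         \<longrightarrow> eigenvector (tridiag_T n \<sigma> \<delta> \<tau> \<alpha> \<beta>) x lam
         \<longrightarrow> left_eigenvector (tridiag_T n \<sigma> \<delta> \<tau> \<alpha> \<beta>) y lam
         \<longrightarrow> cond_number x y = 1)"
proof -
  define dd where "dd c = (\<lambda>i::nat. c - (if i = 0 then \<alpha> else 0) - (if i = n - 1 then \<beta> else 0))" for c
  have A: "tridiag_T n \<sigma> \<delta> \<tau> \<alpha> \<beta> = tri n \<sigma> \<tau> (dd \<delta>)" unfolding dd_def tridiag_tri ..
  have Qs: "s * cnj \<sigma> = cnj s * \<tau>" by (rule key_s[OF assms(2,3,4)])
  have Qa: "\<alpha> * cnj \<sigma> = cnj \<alpha> * \<tau>" and Qb: "\<beta> * cnj \<sigma> = cnj \<beta> * \<tau>"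
    using assms(5) Qs by auto
  have ab: "\<sigma> * cnj \<sigma> = \<tau> * cnj \<tau>"
    using complex_norm_square[of \<sigma>] complex_norm_square[of \<tau>] assms(2) by simp
  have s0: "\<sigma> \<noteq> 0" using assms(3) by auto
  have normal_c: "tri n \<sigma> \<tau> (dd c) * tri n (cnj \<tau>) (cnj \<sigma>) (\<lambda>i. cnj (dd c i))
     = tri n (cnj \<tau>) (cnj \<sigma>) (\<lambda>i. cnj (dd c i)) * tri n \<sigma> \<tau> (dd c)" for c
  proof (rule tri_normal[OF _ ab])
    fix i assume i: "i + 1 < n"
    then have "dd c i - dd c (i+1) = (if i+1 = n-1 then \<beta> else 0) - (if i = 0 then \<alpha> else 0)"
      unfolding dd_def by auto
    then show "(dd c i - dd c (i+1)) * cnj \<sigma> = cnj (dd c i - dd c (i+1)) * \<tau>"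
      using Qa Qb by (simp add: left_diff_distrib)
  qed
  have part1: "normal_mat (tridiag_T n \<sigma> \<delta> \<tau> \<alpha> \<beta>)"
    unfolding normal_mat_def A tri_adjoint by (rule normal_c)
  have part2: "cond_number x y = 1"
    if ex: "eigenvector (tridiag_T n \<sigma> \<delta> \<tau> \<alpha> \<beta>) x lam"
      and ly: "left_eigenvector (tridiag_T n \<sigma> \<delta> \<tau> \<alpha> \<beta>) y lam" for lam x y
  proof -
    have n0: "0 < n" using assms(1) by simp
    have x: "x \<in> carrier_vec n" and xnz: "x \<noteq> 0\<^sub>v n" and Ax: "tri n \<sigma> \<tau> (dd \<delta>) *\<^sub>v x = lam \<cdot>\<^sub>v x"
      using ex unfolding eigenvector_def A by auto
    have y: "y \<in> carrier_vec n" and ynz: "y \<noteq> 0\<^sub>v n"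
      and Ay: "tri n \<tau> \<sigma> (dd \<delta>) *\<^sub>v conjugate y = lam \<cdot>\<^sub>v conjugate y"
      using ly unfolding left_eigenvector_def A tri_transpose by auto
    let ?N = "tri n \<sigma> \<tau> (dd (\<delta> - lam))"
    let ?H = "tri n (cnj \<tau>) (cnj \<sigma>) (\<lambda>i. cnj (dd (\<delta> - lam) i))"
    let ?M = "tri n \<tau> \<sigma> (dd (\<delta> - lam))"
    have ddl: "dd (\<delta> - lam) i = dd \<delta> i - lam" for i unfolding dd_def by simp
    have Nx: "?N *\<^sub>v x = 0\<^sub>v n"
    proof (rule eq_vecI)
      fix i assume "i < dim_vec (0\<^sub>v n :: complex vec)"
      then have i: "i < n" by simp
      have "(tri n \<sigma> \<tau> (dd \<delta>) *\<^sub>v x) $ i = lam * x $ i" using Ax i x by simp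
      then show "(?N *\<^sub>v x) $ i = 0\<^sub>v n $ i"
        unfolding tri_mult_vec[OF x i] ddl using i by (simp add: algebra_simps)
    qed simp
    have Hx: "?H *\<^sub>v x = 0\<^sub>v n" by (rule normal_kernel[OF normal_c x Nx])
    have dx: "dim_vec x = n" and dy: "dim_vec y = n" using x y by auto
    have cx: "conjugate x \<in> carrier_vec n" and cy: "conjugate y \<in> carrier_vec n" using x y by auto
    have Mx: "?M *\<^sub>v conjugate x = 0\<^sub>v n"
    proof (rule eq_vecI)
      fix i assume "i < dim_vec (0\<^sub>v n :: complex vec)"
      then have i: "i < n" by simp
      have "(?H *\<^sub>v x) $ i = 0" using Hx i by simp
      then have "cnj ((?H *\<^sub>v x) $ i) = 0" by simp
      then show "(?M *\<^sub>v conjugate x) $ i = 0\<^sub>v n $ i"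
        unfolding tri_mult_vec[OF x i] tri_mult_vec[OF cx i] using i x by auto
    qed simp
    have My: "?M *\<^sub>v conjugate y = 0\<^sub>v n"
    proof (rule eq_vecI)
      fix i assume "i < dim_vec (0\<^sub>v n :: complex vec)"
      then have i: "i < n" by simp
      have "(tri n \<tau> \<sigma> (dd \<delta>) *\<^sub>v conjugate y) $ i = lam * conjugate y $ i" using Ay i y by simp
      then show "(?M *\<^sub>v conjugate y) $ i = 0\<^sub>v n $ i"
        unfolding tri_mult_vec[OF cy i] ddl using i by (simp add: algebra_simps)
    qed simp
    have u0: "conjugate x $ 0 \<noteq> 0"
    proof
      assume "conjugate x $ 0 = 0"
      then have "conjugate x = 0\<^sub>v n" by (rule tri_unique[OF s0 cx Mx])
      then show False using xnz by simp
    qed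
    define c where "c = conjugate y $ 0 / conjugate x $ 0"
    define v where "v = conjugate y - c \<cdot>\<^sub>v conjugate x"
    have v: "v \<in> carrier_vec n" unfolding v_def using cx cy by auto
    have vi: "v $ i = conjugate y $ i - c * conjugate x $ i" if "i < n" for i
      unfolding v_def using that dx dy by simp
    have Mv: "?M *\<^sub>v v = 0\<^sub>v n"
    proof (rule eq_vecI)
      fix i assume "i < dim_vec (0\<^sub>v n :: complex vec)"
      then have i: "i < n" by simp
      have a: "(?M *\<^sub>v conjugate y) $ i = 0" "(?M *\<^sub>v conjugate x) $ i = 0" using My Mx i by auto
      have "(?M *\<^sub>v v) $ i = (?M *\<^sub>v conjugate y) $ i - c * (?M *\<^sub>v conjugate x) $ i"
        unfolding tri_mult_vec[OF v i] tri_mult_vec[OF cx i] tri_mult_vec[OF cy i]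
        using i by (cases "0 < i"; cases "i + 1 < n"; simp add: vi algebra_simps)
      then show "(?M *\<^sub>v v) $ i = 0\<^sub>v n $ i" using a i by simp
    qed simp
    have "v $ 0 = 0" using vi[OF n0] u0 unfolding c_def by simp
    then have "v = 0\<^sub>v n" by (rule tri_unique[OF s0 v Mv])
    then have "conjugate y $ i = c * conjugate x $ i" if "i < n" for i
      using vi[OF that] that by (metis eq_iff_diff_eq_0 index_zero_vec(1))
    then have yi: "y $ i = cnj c * x $ i" if "i < n" for i
      using that x y by (metis carrier_vecD complex_cnj_cnj complex_cnj_mult conjugate_complex_def vec_index_conjugate)
    define e where "e = cnj c"
    have yi': "y $ i = e * x $ i" if "i < n" for i using yi[OF that] unfolding e_def .
    have e0: "e \<noteq> 0"
    proof
      assume "e = 0"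
      then have "y = 0\<^sub>v n" using y yi' by (intro eq_vecI) auto
      then show False using ynz by simp
    qed
    define S where "S = (\<Sum>i<n. (cmod (x $ i))\<^sup>2)"
    have S0: "S > 0"
    proof -
      obtain j where j: "j < n" "x $ j \<noteq> 0" using xnz x by (metis eq_vecI carrier_vecD index_zero_vec)
      have "(cmod (x $ j))\<^sup>2 \<le> S" unfolding S_def
        by (rule member_le_sum[where f="\<lambda>i. (cmod (x $ i))\<^sup>2"], insert j, auto)
      moreover have "(cmod (x $ j))\<^sup>2 > 0" using j by simp
      ultimately show ?thesis by linarith
    qed
    have nx: "vnorm2 x = sqrt S" unfolding vnorm2_def S_def dx ..
    have "vnorm2 y = sqrt (\<Sum>i<n. (cmod e)\<^sup>2 * (cmod (x $ i))\<^sup>2)"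
      unfolding vnorm2_def dy by (rule arg_cong[where f=sqrt], rule sum.cong, auto simp: yi' norm_mult power_mult_distrib)
    also have "\<dots> = cmod e * sqrt S" unfolding S_def sum_distrib_left[symmetric]
      by (simp add: real_sqrt_mult)
    finally have ny: "vnorm2 y = cmod e * sqrt S" .
    have "x \<bullet>c y = (\<Sum>i\<in>{0..<n}. x $ i * cnj (y $ i))"
      unfolding scalar_prod_def using dx dy by simp
    also have "\<dots> = (\<Sum>i\<in>{0..<n}. cnj e * of_real ((cmod (x $ i))\<^sup>2))"
    proof (rule sum.cong)
      fix i assume "i \<in> {0..<n}"
      then have "x $ i * cnj (y $ i) = cnj e * (x $ i * cnj (x $ i))" using yi' by simp
      then show "x $ i * cnj (y $ i) = cnj e * of_real ((cmod (x $ i))\<^sup>2)" unfolding complex_norm_square .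
    qed simp
    also have "\<dots> = cnj e * of_real S" unfolding S_def sum_distrib_left[symmetric] of_real_sum atLeast0LessThan ..
    finally have "cmod (x \<bullet>c y) = cmod e * S" using S0 by (simp add: norm_mult)
    then show ?thesis unfolding cond_number_def nx ny using S0 e0
      by (simp add: field_simps)
  qed
  show ?thesis using part1 part2 by blast
qed

end
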